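(* There is a constant $c$ such that, as $n\to\infty$, the fraction of Boolean $n\times n$ matrices $A$ for which the size of a smallest cancellation-free linear circuit computing $A$ is at most $c$ times the size of a smallest linear circuit computing $A$ tends to $1$. That is, for almost every matrix the cancellation ratio is bounded by a constant.
   Context: A linear circuit over $\mathbb{F}_2$ with inputs $x_1,\ldots,x_n$ is a directed acyclic graph whose in-degree-0 nodes are the inputs and whose other nodes (gates) have in-degree 2 and compute the XOR of their two children; $n$ nodes are designated as outputs $y_1,\ldots,y_n$, and the circuit computes $A$ if $\mathbf{y}=A\mathbf{x}$ for all $\mathbf{x}\in\mathbb{F}_2^n$. The size is the number of gates. The value vector $\kappa(u)\in\mathbb{F}_2^n$ of a node $u$ has $\kappa(u)_i=1$ iff $x_i$ occurs in the parity computed at $u$. A linear circuit is cancellation-free if whenever there is a directed path from a node $w$ to a node $u$, $\kappa(u)\geq\kappa(w)$ coordinatewise. The cancellation ratio of a matrix is the ratio between the size of a smallest cancellation-free linear circuit computing it and the size of a smallest linear circuit computing it. *)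

theory Defs
  imports Complex_Main
begin

text \<open>
Nodes 0..n-1 are the inputs x_0..x_{n-1};
node n+j (j < ngates C) is the j-th XOR gate, whose two (distinct) children are the
nodes lch C j and rch C j, both numbered below n+j (a topological numbering, so every
DAG of this kind is representable).  outp C i is the node designated as output y_i.
Value vectors kappa(u) are represented as subsets of {0..<n} (the support of the vector).
A Boolean n x n matrix is represented by the set of positions (i,k) of its 1-entries.
\<close>

record lcirc =
  ngates :: nat
  lch :: "nat \<Rightarrow> nat"
  rch :: "nat \<Rightarrow> nat"
  outp :: "nat \<Rightarrow> nat"

definition wf_circ :: "nat \<Rightarrow> lcirc \<Rightarrow> bool" where
  "wf_circ n C \<longleftrightarrow>
     (\<forall>j < ngates C. lch C j < n + j \<and> rch C j < n + j \<and> lch C j \<noteq> rch C j) \<and>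
     (\<forall>i < n. outp C i < n + ngates C)"

function kval :: "nat \<Rightarrow> lcirc \<Rightarrow> nat \<Rightarrow> nat set" where
  "kval n C v =
     (if v < n then {v}
      else if v < n + ngates C \<and> lch C (v - n) < v \<and> rch C (v - n) < v then
        (kval n C (lch C (v - n)) - kval n C (rch C (v - n))) \<union>
        (kval n C (rch C (v - n)) - kval n C (lch C (v - n)))
      else {})"
  by pat_completeness auto
termination by (relation "measure (\<lambda>(n, C, v). v)") auto

definition cedges :: "nat \<Rightarrow> lcirc \<Rightarrow> (nat \<times> nat) set" where
  "cedges n C = {(w, n + j) | w j. j < ngates C \<and> (w = lch C j \<or> w = rch C j)}"

definition cancellation_free :: "nat \<Rightarrow> lcirc \<Rightarrow> bool" where
  "cancellation_free n C \<longleftrightarrow>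
     (\<forall>w u. (w, u) \<in> (cedges n C)\<^sup>+ \<longrightarrow> kval n C w \<subseteq> kval n C u)"

definition computes :: "nat \<Rightarrow> lcirc \<Rightarrow> (nat \<times> nat) set \<Rightarrow> bool" where
  "computes n C A \<longleftrightarrow> wf_circ n C \<and>
     (\<forall>i < n. kval n C (outp C i) = {k. k < n \<and> (i, k) \<in> A})"

definition ratio_bounded :: "real \<Rightarrow> nat \<Rightarrow> (nat \<times> nat) set \<Rightarrow> bool" where
  "ratio_bounded c n A \<longleftrightarrow>
     (\<exists>C. computes n C A \<and> cancellation_free n C \<and>
        (\<forall>D. computes n D A \<longrightarrow> real (ngates C) \<le> c * real (ngates D)))"

end

theory Submission
  imports Defs "HOL-Library.FuncSet" "HOL-Library.Discrete_Functions"
begin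

declare kval.simps[simp del]

lemma kval_in: "v < n \<Longrightarrow> kval n C v = {v}"
  by (subst kval.simps) simp

lemma kval_gate:
  assumes "j < ngates C" "lch C j < n + j" "rch C j < n + j"
  shows "kval n C (n + j) = (kval n C (lch C j) - kval n C (rch C j)) \<union> (kval n C (rch C j) - kval n C (lch C j))"
  using assms by (subst kval.simps) simp

lemma kval_agree:
  assumes "m \<le> ngates C" "m \<le> ngates C'" "\<forall>j<m. lch C j = lch C' j \<and> rch C j = rch C' j"
  shows "v < n + m \<Longrightarrow> kval n C v = kval n C' v"
proof (induction v rule: less_induct)
  case (less v)
  show ?case
  proof (cases "v < n")
    case True then show ?thesis by (simp add: kval_in)
  next
    case False
    then have j: "v - n < m" using less.prems by simp
    have e: "lch C (v-n) = lch C' (v-n)" "rch C (v-n) = rch C' (v-n)" using assms(3) j by auto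
    have c1: "v < n + ngates C" "v < n + ngates C'" using less.prems assms by auto
    show ?thesis
    proof (cases "lch C (v - n) < v \<and> rch C (v - n) < v")
      case True
      then have "lch C (v-n) < n + m" "rch C (v-n) < n+m" using less.prems by auto
      have u1: "kval n C v = (kval n C (lch C (v-n)) - kval n C (rch C (v-n))) \<union> (kval n C (rch C (v-n)) - kval n C (lch C (v-n)))"
        by (rule trans[OF kval.simps[of n C v]]) (use True c1 False in simp)
      have u2: "kval n C' v = (kval n C' (lch C' (v-n)) - kval n C' (rch C' (v-n))) \<union> (kval n C' (rch C' (v-n)) - kval n C' (lch C' (v-n)))"
        by (rule trans[OF kval.simps[of n C' v]]) (use True c1 False e in simp)
      have "kval n C (lch C (v-n)) = kval n C' (lch C (v-n))" "kval n C (rch C (v-n)) = kval n C' (rch C (v-n))"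
        using less.IH True \<open>lch C (v-n) < n + m\<close> \<open>rch C (v-n) < n + m\<close> by auto
      then show ?thesis unfolding u1 u2 e by simp
    next
      case False2: False
      have nc: "\<not>(v < n + ngates C \<and> lch C (v-n) < v \<and> rch C (v-n) < v)" using False2 by blast
      have nc': "\<not>(v < n + ngates C' \<and> lch C' (v-n) < v \<and> rch C' (v-n) < v)" using False2 e by simp
      have u1: "kval n C v = {}"
        by (rule trans[OF kval.simps[of n C v]]) (simp only: False nc if_False)
      have u2: "kval n C' v = {}"
        by (rule trans[OF kval.simps[of n C' v]]) (simp only: False nc' if_False)
      show ?thesis using u1 u2 by simp
    qed
  qed
qed

definition gok :: "nat \<Rightarrow> lcirc \<Rightarrow> bool" where
  "gok n C \<longleftrightarrow> (\<forall>j<ngates C. lch C j < n+j \<and> rch C j < n+j \<and> lch C j \<noteq> rch C j \<and>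
      kval n C (lch C j) \<inter> kval n C (rch C j) = {})"

definition G :: "nat \<Rightarrow> nat set set \<Rightarrow> nat \<Rightarrow> bool" where
  "G n F s \<longleftrightarrow> (\<exists>C. ngates C \<le> s \<and> gok n C \<and> (\<forall>X\<in>F. \<exists>v<n+ngates C. kval n C v = X))"

lemma G_mono: "G n F s \<Longrightarrow> F' \<subseteq> F \<Longrightarrow> s \<le> s' \<Longrightarrow> G n F' s'"
  unfolding G_def by (meson order_trans subsetD)

lemma G_base: "G n {{i}|i. i<n} 0"
  unfolding G_def gok_def
  by (rule exI[of _ "\<lparr>ngates = 0, lch = \<lambda>_. 0, rch = \<lambda>_. 0, outp = \<lambda>_. 0\<rparr>"]) (auto simp: kval_in)

lemma G_step:
  assumes "G n F s" "a \<in> F" "b \<in> F" "a \<inter> b = {}" "a \<noteq> {}"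
  shows "G n (insert (a \<union> b) F) (Suc s)"
proof -
  obtain C where C: "ngates C \<le> s" "gok n C" "\<forall>X\<in>F. \<exists>v<n+ngates C. kval n C v = X"
    using assms(1) unfolding G_def by blast
  obtain va where va: "va < n + ngates C" "kval n C va = a" using C(3) assms(2) by blast
  obtain vb where vb: "vb < n + ngates C" "kval n C vb = b" using C(3) assms(3) by blast
  define g where "g = ngates C"
  define C' where "C' = C\<lparr>ngates := Suc g, lch := (lch C)(g := va), rch := (rch C)(g := vb)\<rparr>"
  have ag: "\<And>v. v < n + g \<Longrightarrow> kval n C' v = kval n C v"
    by (rule kval_agree[of g]) (auto simp: C'_def g_def)
  have neq: "va \<noteq> vb" using va vb assms(4,5) by auto
  have top: "kval n C' (n + g) = a \<union> b"
    using kval_gate[of g C' n] va vb ag assms(4) by (auto simp: C'_def g_def)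
  have "gok n C'"
    unfolding gok_def
  proof (intro allI impI)
    fix j assume j: "j < ngates C'"
    show "lch C' j < n + j \<and> rch C' j < n + j \<and> lch C' j \<noteq> rch C' j \<and>
      kval n C' (lch C' j) \<inter> kval n C' (rch C' j) = {}"
    proof (cases "j = g")
      case True then show ?thesis using va vb neq ag assms(4) by (auto simp: C'_def g_def)
    next
      case False
      then have "j < g" using j by (simp add: C'_def)
      then have "lch C j < n + j \<and> rch C j < n + j \<and> lch C j \<noteq> rch C j \<and>
        kval n C (lch C j) \<inter> kval n C (rch C j) = {}" using C(2) unfolding gok_def g_def by auto
      then show ?thesis using False \<open>j < g\<close> ag by (auto simp: C'_def)
    qed
  qed
  moreover have "\<forall>X\<in>insert (a \<union> b) F. \<exists>v<n+ngates C'. kval n C' v = X"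
  proof
    fix X assume "X \<in> insert (a \<union> b) F"
    then show "\<exists>v<n+ngates C'. kval n C' v = X"
    proof
      assume "X = a \<union> b" then show ?thesis using top by (intro exI[of _ "n+g"]) (auto simp: C'_def)
    next
      assume "X \<in> F"
      then obtain v where "v < n + g" "kval n C v = X" using C(3) g_def by auto
      then show ?thesis using ag by (intro exI[of _ v]) (auto simp: C'_def)
    qed
  qed
  moreover have "ngates C' \<le> Suc s" using C(1) by (simp add: C'_def g_def)
  ultimately show ?thesis unfolding G_def by blast
qed




definition sok :: "nat set set \<Rightarrow> nat set \<Rightarrow> bool" where
  "sok F t \<longleftrightarrow> (\<exists>a b. a\<in>F \<and> b\<in>F \<and> a\<inter>b={} \<and> a\<noteq>{} \<and> t = a\<union>b)"

lemma sok_mono: "sok F t \<Longrightarrow> F \<subseteq> F' \<Longrightarrow> sok F' t"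
  unfolding sok_def by blast

lemma G_addall:
  assumes "finite T" "G n F s" "\<forall>t\<in>T. sok F t"
  shows "G n (F \<union> T) (s + card T)"
  using assms(1,3)
proof (induction T rule: finite_induct)
  case empty then show ?case using assms(2) by simp
next
  case (insert t T)
  have h: "\<forall>t\<in>T. sok F t" "sok F t" using insert.prems by auto
  have IH: "G n (F \<union> T) (s + card T)" by (rule insert.IH[OF h(1)])
  obtain a b where ab: "a\<in>F" "b\<in>F" "a\<inter>b={}" "a\<noteq>{}" "t = a\<union>b" using h(2) unfolding sok_def by blast
  have "G n (insert (a \<union> b) (F \<union> T)) (Suc (s + card T))"
    by (rule G_step[OF IH]) (use ab in auto)
  moreover have "insert (a \<union> b) (F \<union> T) = F \<union> insert t T" using ab by auto
  ultimately show ?case using insert.hyps by simp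
qed

lemma G_block:
  assumes "finite B" "G n F s" "\<forall>x\<in>B. {x} \<in> F"
  shows "G n (F \<union> (Pow B - {{}})) (s + 2 ^ card B)"
  using assms
proof (induction B rule: finite_induct)
  case empty then show ?case using G_mono by fastforce
next
  case (insert x B)
  define F' where "F' = F \<union> (Pow B - {{}})"
  have IH: "G n F' (s + 2 ^ card B)" unfolding F'_def by (rule insert.IH) (use insert.prems in auto)
  define T where "T = insert x ` (Pow B - {{}})"
  have fT: "finite T" using insert.hyps T_def by simp
  have cT: "card T \<le> 2 ^ card B"
  proof -
    have "card T \<le> card (Pow B - {{}})" unfolding T_def by (rule card_image_le) (use insert.hyps in simp)
    also have "\<dots> \<le> card (Pow B)" by (rule card_mono) (use \<open>finite B\<close> in auto)
    also have "\<dots> = 2 ^ card B" using \<open>finite B\<close> by (rule card_Pow)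
    finally show ?thesis .
  qed
  have "G n (F' \<union> T) (s + 2 ^ card B + card T)"
  proof (rule G_addall[OF fT IH], rule ballI)
    fix t assume "t \<in> T"
    then obtain S where S: "S \<subseteq> B" "S \<noteq> {}" "t = insert x S" unfolding T_def by auto
    show "sok F' t" unfolding sok_def
      by (rule exI[of _ "{x}"], rule exI[of _ S]) (use S insert in \<open>auto simp: F'_def\<close>)
  qed
  moreover have "F \<union> (Pow (insert x B) - {{}}) \<subseteq> F' \<union> T"
  proof
    fix S assume S: "S \<in> F \<union> (Pow (insert x B) - {{}})"
    show "S \<in> F' \<union> T"
    proof (cases "S \<in> F")
      case True then show ?thesis by (simp add: F'_def)
    next
      case False
      then have S1: "S \<subseteq> insert x B" "S \<noteq> {}" using S by auto
      show ?thesis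
      proof (cases "x \<in> S")
        case True
        show ?thesis
        proof (cases "S - {x} = {}")
          case True
          then have "S = {x}" using \<open>x \<in> S\<close> by auto
          then show ?thesis using insert.prems by (simp add: F'_def)
        next
          case False
          then have "S = insert x (S - {x})" "S - {x} \<in> Pow B - {{}}" using \<open>x\<in>S\<close> S1 by auto
          then show ?thesis unfolding T_def by blast
        qed
      next
        case False
        then show ?thesis using S1 by (auto simp: F'_def)
      qed
    qed
  qed
  moreover have "s + 2 ^ card B + card T \<le> s + 2 ^ card (insert x B)"
    using cT insert.hyps by simp
  ultimately show ?case using G_mono by blast
qed

lemma G_union:
  assumes "finite P" "P \<noteq> {}" "G n F s" "P \<subseteq> F"
    "\<forall>p\<in>P. \<forall>q\<in>P. p \<noteq> q \<longrightarrow> p \<inter> q = {}" "\<forall>p\<in>P. p \<noteq> {}"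
  shows "G n (insert (\<Union>P) F) (s + card P - 1)"
  using assms(1,2,4-6)
proof (induction P rule: finite_ne_induct)
  case (singleton p)
  then show ?case using assms(3) by (simp add: insert_absorb)
next
  case (insert x P)
  have p1: "P \<subseteq> F" using insert.prems(1) by simp
  have p2: "\<forall>p\<in>P. \<forall>q\<in>P. p \<noteq> q \<longrightarrow> p \<inter> q = {}" using insert.prems(2) by simp
  have p3: "\<forall>p\<in>P. p \<noteq> {}" using insert.prems(3) by simp
  have IH: "G n (insert (\<Union>P) F) (s + card P - 1)" by (rule insert.IH[OF p1 p2 p3])
  have xq: "\<forall>q\<in>P. x \<inter> q = {}"
  proof
    fix q assume "q \<in> P"
    then have "x \<noteq> q" using insert.hyps by auto
    then show "x \<inter> q = {}" using insert.prems(2) \<open>q \<in> P\<close> by simp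
  qed
  have d: "x \<inter> \<Union>P = {}" using xq by blast
  have xF: "x \<in> insert (\<Union>P) F" using insert.prems(1) by simp
  have xne: "x \<noteq> {}" using insert.prems(3) by simp
  have "G n (insert (x \<union> \<Union>P) (insert (\<Union>P) F)) (Suc (s + card P - 1))"
    by (rule G_step[OF IH xF _ d xne]) simp
  moreover have "card P \<ge> 1" using insert.hyps by (simp add: Suc_leI card_gt_0_iff)
  moreover have "card (insert x P) = Suc (card P)" using insert.hyps by simp
  moreover have "\<Union>(insert x P) = x \<union> \<Union>P" by simp
  ultimately show ?case using G_mono[of n "insert (x \<union> \<Union>P) (insert (\<Union>P) F)" "Suc (s + card P - 1)"
      "insert (\<Union>(insert x P)) F" "s + card (insert x P) - 1"] by auto
qed

lemma gok_cf:
  assumes "gok n C"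
  shows "cancellation_free n C"
proof -
  have e: "kval n C w \<subseteq> kval n C u" if h0: "(w,u) \<in> cedges n C" for w u
  proof -
    obtain j where j: "j < ngates C" "u = n + j" "w = lch C j \<or> w = rch C j"
      using h0 unfolding cedges_def by blast
    have h: "lch C j < n+j" "rch C j < n+j" "kval n C (lch C j) \<inter> kval n C (rch C j) = {}"
      using assms j unfolding gok_def by auto
    show ?thesis using kval_gate[of j C n] j h by auto
  qed
  show ?thesis unfolding cancellation_free_def
  proof (intro allI impI)
    fix w u assume "(w,u) \<in> (cedges n C)\<^sup>+"
    then show "kval n C w \<subseteq> kval n C u"
      by (induction rule: trancl_induct) (use e in blast)+
  qed
qed

lemma G_circuit:
  assumes "G n F s" "\<forall>i<n. R i \<in> F"
  shows "\<exists>C. ngates C \<le> s \<and> wf_circ n C \<and> cancellation_free n C \<and> (\<forall>i<n. kval n C (outp C i) = R i)"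
proof -
  obtain C where C: "ngates C \<le> s" "gok n C" "\<forall>X\<in>F. \<exists>v<n+ngates C. kval n C v = X"
    using assms(1) unfolding G_def by blast
  define o' where "o' = (\<lambda>i. SOME v. v < n + ngates C \<and> kval n C v = R i)"
  have o: "o' i < n + ngates C \<and> kval n C (o' i) = R i" if "i < n" for i
    unfolding o'_def by (rule someI_ex) (use C(3) assms(2) that in blast)
  define C' where "C' = C\<lparr>outp := o'\<rparr>"
  have c1: "ngates C' = ngates C" "lch C' = lch C" "rch C' = rch C" "outp C' = o'"
    by (simp_all add: C'_def)
  have ag: "kval n C' v = kval n C v" if "v < n + ngates C" for v
    by (rule kval_agree[of "ngates C"]) (use that c1 in auto)
  have g: "gok n C'" unfolding gok_def c1
  proof (intro allI impI)
    fix j assume j: "j < ngates C"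
    then have h: "lch C j < n+j \<and> rch C j < n+j \<and> lch C j \<noteq> rch C j \<and>
      kval n C (lch C j) \<inter> kval n C (rch C j) = {}" using C(2) unfolding gok_def by blast
    have "lch C j < n + ngates C" "rch C j < n + ngates C" using h j by auto
    then have "kval n C' (lch C j) = kval n C (lch C j)" "kval n C' (rch C j) = kval n C (rch C j)"
      using ag by blast+
    then show "lch C j < n+j \<and> rch C j < n+j \<and> lch C j \<noteq> rch C j \<and>
      kval n C' (lch C j) \<inter> kval n C' (rch C j) = {}" using h by simp
  qed
  have w1: "\<forall>j<ngates C'. lch C' j < n + j \<and> rch C' j < n + j \<and> lch C' j \<noteq> rch C' j"
    using g unfolding gok_def by blast
  have w2: "\<forall>i<n. outp C' i < n + ngates C'" using o unfolding c1 by blast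
  have w: "wf_circ n C'" unfolding wf_circ_def using w1 w2 by blast
  have k: "\<forall>i<n. kval n C' (outp C' i) = R i"
  proof (intro allI impI)
    fix i assume i: "i < n"
    show "kval n C' (outp C' i) = R i" unfolding c1 using o[OF i] ag[of "o' i"] by simp
  qed
  have "ngates C' \<le> s" using C(1) c1 by simp
  then show ?thesis using w k gok_cf[OF g] by (intro exI[of _ C']) simp
qed




lemma div_bounds:
  assumes "(k::nat) > 0"
  shows "i div k * k \<le> i" "i < i div k * k + k"
proof -
  have e: "i = i div k * k + i mod k" by simp
  show "i div k * k \<le> i" by (metis e le_add1)
  have "i mod k < k" using assms by simp
  then show "i < i div k * k + k" using e by linarith
qed

lemma upper:
  fixes n k :: nat and A :: "(nat \<times> nat) set"
  assumes k: "k \<ge> 1" and ne: "\<forall>i<n. {j. j<n \<and> (i,j)\<in>A} \<noteq> {}"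
  shows "\<exists>C. computes n C A \<and> cancellation_free n C \<and>
           ngates C \<le> (n div k + 1) * 2^k + n * (n div k + 1)"
proof -
  define bl where "bl t = {i. i<n \<and> i div k = t}" for t
  define b where "b = n div k + 1"
  define S0 where "S0 = {{i}|i. i<n}"
  define FB where "FB m = S0 \<union> (\<Union>t<m. Pow (bl t) - {{}})" for m
  define R where "R i = {j. j<n \<and> (i,j)\<in>A}" for i
  have kpos: "k > 0" using k by simp
  have cbl: "card (bl t) \<le> k" for t
  proof -
    have "bl t \<subseteq> {t*k..<t*k+k}"
    proof
      fix i assume "i \<in> bl t"
      then have "i div k = t" unfolding bl_def by simp
      then show "i \<in> {t*k..<t*k+k}" using div_bounds[OF kpos, of i] by auto
    qed
    then have "card (bl t) \<le> card {t*k..<t*k+k}" by (rule card_mono[rotated]) simp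
    then show ?thesis by simp
  qed
  have fbl: "finite (bl t)" for t unfolding bl_def by simp
  have blocks: "G n (FB m) (m * 2^k)" for m
  proof (induction m)
    case 0 then show ?case using G_base unfolding FB_def S0_def by simp
  next
    case (Suc m)
    have sing: "\<forall>x\<in>bl m. {x} \<in> FB m" unfolding FB_def S0_def bl_def by auto
    have g1: "G n (FB m \<union> (Pow (bl m) - {{}})) (m * 2^k + 2 ^ card (bl m))"
      by (rule G_block[OF fbl Suc.IH sing])
    have e1: "FB (Suc m) = FB m \<union> (Pow (bl m) - {{}})"
      unfolding FB_def by (auto simp: lessThan_Suc)
    have p1: "2 ^ card (bl m) \<le> (2::nat) ^ k" by (rule power_increasing[OF cbl]) simp
    have l1: "m * 2^k + 2 ^ card (bl m) \<le> Suc m * 2^k" using p1 by simp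
    show ?case by (rule G_mono[OF g1 _ l1]) (simp add: e1)
  qed
  have rows: "G n (FB b \<union> {R i | i. i < m}) (b * 2^k + m * b)" if "m \<le> n" for m
    using that
  proof (induction m)
    case 0 then show ?case using blocks[of b] by simp
  next
    case (Suc m)
    define F where "F = FB b \<union> {R i | i. i < m}"
    have IH: "G n F (b * 2^k + m * b)" using Suc by (simp add: F_def)
    have mn: "m < n" using Suc.prems by simp
    define P where "P = (\<lambda>t. R m \<inter> bl t) ` {..<b} - {{}}"
    have fP: "finite P" unfolding P_def by simp
    have tb: "j div k < b" if "j < n" for j
    proof -
      have "j div k \<le> n div k" using that by (simp add: div_le_mono)
      then show ?thesis unfolding b_def by simp
    qed
    have UP: "\<Union>P = R m"
    proof
      show "\<Union>P \<subseteq> R m" unfolding P_def by auto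
      show "R m \<subseteq> \<Union>P"
      proof
        fix j assume j: "j \<in> R m"
        then have jn: "j < n" unfolding R_def by simp
        have "j \<in> R m \<inter> bl (j div k)" using j jn unfolding bl_def by simp
        moreover have "R m \<inter> bl (j div k) \<in> P" unfolding P_def using tb[OF jn] calculation by auto
        ultimately show "j \<in> \<Union>P" by blast
      qed
    qed
    have Pne: "P \<noteq> {}"
    proof
      assume "P = {}"
      then have "R m = {}" using UP by simp
      then show False using ne mn unfolding R_def by blast
    qed
    have PF: "P \<subseteq> F"
    proof
      fix p assume "p \<in> P"
      then obtain t where t: "t < b" "p = R m \<inter> bl t" "p \<noteq> {}" unfolding P_def by auto
      then have "p \<in> Pow (bl t) - {{}}" by auto
      then show "p \<in> F" unfolding F_def FB_def using t(1) by blast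
    qed
    have Pd: "\<forall>p\<in>P. \<forall>q\<in>P. p \<noteq> q \<longrightarrow> p \<inter> q = {}"
    proof (intro ballI impI)
      fix p q assume "p \<in> P" "q \<in> P" "p \<noteq> q"
      then obtain t t' where "p = R m \<inter> bl t" "q = R m \<inter> bl t'" "t \<noteq> t'" unfolding P_def by auto
      then show "p \<inter> q = {}" unfolding bl_def by auto
    qed
    have Pn: "\<forall>p\<in>P. p \<noteq> {}" unfolding P_def by simp
    have cP: "card P \<le> b"
    proof -
      have "card P \<le> card ((\<lambda>t. R m \<inter> bl t) ` {..<b})" unfolding P_def by (rule card_mono) auto
      also have "\<dots> \<le> card {..<b}" by (rule card_image_le) simp
      finally show ?thesis by simp
    qed
    have g1: "G n (insert (\<Union>P) F) (b * 2^k + m * b + card P - 1)"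
      by (rule G_union[OF fP Pne IH PF Pd Pn])
    have e1: "insert (\<Union>P) F = FB b \<union> {R i | i. i < Suc m}"
      unfolding UP F_def by (auto simp: less_Suc_eq)
    have l1: "b * 2^k + m * b + card P - 1 \<le> b * 2^k + Suc m * b" using cP by simp
    show ?case by (rule G_mono[OF g1 _ l1]) (simp add: e1)
  qed
  have Gn: "G n (FB b \<union> {R i | i. i < n}) (b * 2^k + n * b)" using rows by simp
  have "\<forall>i<n. R i \<in> FB b \<union> {R i | i. i < n}" by blast
  then obtain C where C: "ngates C \<le> b * 2^k + n * b" "wf_circ n C" "cancellation_free n C"
      "\<forall>i<n. kval n C (outp C i) = R i"
    using G_circuit[OF Gn] by blast
  have "computes n C A" unfolding computes_def using C(2,4) unfolding R_def by simp
  then show ?thesis using C(1,3) unfolding b_def by blast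
qed




definition matof :: "nat \<Rightarrow> lcirc \<Rightarrow> (nat \<times> nat) set" where
  "matof n D = {(i,k). i<n \<and> k<n \<and> k \<in> kval n D (outp D i)}"

lemma computes_matof:
  assumes "computes n D A" "A \<subseteq> {..<n} \<times> {..<n}"
  shows "A = matof n D"
  using assms unfolding computes_def matof_def by auto

lemma cheap_count:
  "card {A \<in> Pow ({..<n} \<times> {..<n}). \<exists>D. computes n D A \<and> ngates D \<le> s}
     \<le> (s+1) * (n+s)^s * (n+s)^s * (n+s)^n"
proof -
  define X where "X = {..s} \<times> (PiE {..<s} (\<lambda>_. {..<n+s})) \<times> (PiE {..<s} (\<lambda>_. {..<n+s}))
        \<times> (PiE {..<n} (\<lambda>_. {..<n+s}))"
  define f where "f = (\<lambda>(g,l,r,ou). matof n \<lparr>ngates = g, lch = l, rch = r, outp = ou\<rparr>)"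
  have sub: "{A \<in> Pow ({..<n} \<times> {..<n}). \<exists>D. computes n D A \<and> ngates D \<le> s} \<subseteq> f ` X"
  proof
    fix A assume "A \<in> {A \<in> Pow ({..<n} \<times> {..<n}). \<exists>D. computes n D A \<and> ngates D \<le> s}"
    then obtain D where A: "A \<subseteq> {..<n} \<times> {..<n}" "computes n D A" "ngates D \<le> s" by blast
    define g where "g = ngates D"
    define l where "l = restrict (\<lambda>j. if j < g then lch D j else 0) {..<s}"
    define r where "r = restrict (\<lambda>j. if j < g then rch D j else 0) {..<s}"
    define o' where "o' = restrict (outp D) {..<n}"
    define D' where "D' = \<lparr>ngates = g, lch = l, rch = r, outp = o'\<rparr>"
    have wf: "wf_circ n D" using A(2) unfolding computes_def by simp
    have gs: "g \<le> s" using A(3) g_def by simp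
    have inX: "(g,l,r,o') \<in> X" unfolding X_def
    proof (intro SigmaI)
      show "g \<in> {..s}" using gs by simp
      have wl: "lch D j < n + s \<and> rch D j < n + s" if "j < g" for j
        using wf gs that unfolding wf_circ_def g_def by fastforce
      show "l \<in> PiE {..<s} (\<lambda>_. {..<n+s})" unfolding l_def restrict_PiE_iff using wl by auto
      show "r \<in> PiE {..<s} (\<lambda>_. {..<n+s})" unfolding r_def restrict_PiE_iff using wl by auto
      show "o' \<in> PiE {..<n} (\<lambda>_. {..<n+s})" unfolding o'_def restrict_PiE_iff
        using wf gs unfolding wf_circ_def g_def by fastforce
    qed
    have ag: "kval n D' v = kval n D v" if "v < n + g" for v
      by (rule kval_agree[of g]) (use that gs in \<open>auto simp: D'_def l_def r_def g_def\<close>)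
    have "matof n D' = matof n D"
    proof -
      have "kval n D' (outp D' i) = kval n D (outp D i)" if "i < n" for i
      proof -
        have "outp D' i = outp D i" using that by (simp add: D'_def o'_def)
        moreover have "outp D i < n + g" using wf that unfolding wf_circ_def g_def by simp
        ultimately show ?thesis using ag by simp
      qed
      then show ?thesis unfolding matof_def by auto
    qed
    then have "A = f (g,l,r,o')" using computes_matof[OF A(2,1)] by (simp add: f_def D'_def)
    then show "A \<in> f ` X" using inX by blast
  qed
  have fX: "finite X" unfolding X_def by (simp add: finite_PiE)
  have "card {A \<in> Pow ({..<n} \<times> {..<n}). \<exists>D. computes n D A \<and> ngates D \<le> s} \<le> card (f ` X)"
    by (rule card_mono[OF _ sub]) (use fX in simp)
  also have "\<dots> \<le> card X" by (rule card_image_le[OF fX])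
  also have "card X = (s+1) * (n+s)^s * (n+s)^s * (n+s)^n"
    unfolding X_def by (simp add: card_cartesian_product card_PiE algebra_simps)
  finally show ?thesis .
qed

lemma zero_count:
  "card {A \<in> Pow ({..<n} \<times> {..<n}). \<exists>i<n. {j. j<n \<and> (i,j)\<in>A} = {}} \<le> n * 2^(n*n - n)"
proof -
  define sq where "sq = {..<n} \<times> {..<(n::nat)}"
  have sub: "{A \<in> Pow sq. \<exists>i<n. {j. j<n \<and> (i,j)\<in>A} = {}} \<subseteq> (\<Union>i<n. Pow (sq - {i} \<times> {..<n}))"
    unfolding sq_def by auto
  have c: "card (Pow (sq - {i} \<times> {..<n})) = 2^(n*n - n)" if "i < n" for i
  proof -
    have "card (sq - {i} \<times> {..<n}) = card sq - card ({i} \<times> {..<n})"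
      by (rule card_Diff_subset) (use that in \<open>auto simp: sq_def\<close>)
    also have "\<dots> = n*n - n" by (simp add: sq_def card_cartesian_product)
    finally show ?thesis by (simp add: card_Pow sq_def)
  qed
  have "card {A \<in> Pow sq. \<exists>i<n. {j. j<n \<and> (i,j)\<in>A} = {}} \<le> card (\<Union>i<n. Pow (sq - {i} \<times> {..<n}))"
    by (rule card_mono[OF _ sub]) (simp add: sq_def)
  also have "\<dots> \<le> (\<Sum>i<n. card (Pow (sq - {i} \<times> {..<n})))" by (rule card_UN_le) simp
  also have "\<dots> = (\<Sum>i<n. 2^(n*n - n))" using c by simp
  finally show ?thesis unfolding sq_def by simp
qed




lemma pow_ge_lin: "L \<ge> 6 \<Longrightarrow> 8 * (L + 1) \<le> (2::nat) ^ L"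
proof (induction L rule: dec_induct)
  case base then show ?case by simp
next
  case (step m) then show ?case by simp
qed

lemma logfacts:
  assumes "n \<ge> 64"
  shows "floor_log n \<ge> 6" "2 ^ floor_log n \<le> n" "8 * (floor_log n + 1) \<le> n" "n < 2 * 2 ^ floor_log n"
proof -
  have "floor_log 64 \<le> floor_log n" by (rule floor_log_le_iff[OF assms])
  moreover have "floor_log (64::nat) = 6" using floor_log_power[of 6] by simp
  ultimately show L6: "floor_log n \<ge> 6" by simp
  show p: "2 ^ floor_log n \<le> n" by (rule floor_log_exp2_le) (use assms in simp)
  show "8 * (floor_log n + 1) \<le> n" using pow_ge_lin[OF L6] p by linarith
  show "n < 2 * 2 ^ floor_log n" by (rule floor_log_exp2_gt)
qed

lemma count_arith:
  assumes n: "n \<ge> 64" and L: "L = floor_log n" and s: "s = n * n div (8 * (L + 1))"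
  shows "(s+1) * (n+s)^s * (n+s)^s * (n+s)^n \<le> 2^(n*n - n)"
proof -
  have L6: "L \<ge> 6" "2^L \<le> n" "8*(L+1) \<le> n" "n < 2*2^L" using logfacts[OF n] L by auto
  have s8: "s * (8*(L+1)) \<le> n*n" unfolding s by (rule div_times_less_eq_dividend)
  have "8 * s \<le> s * (8*(L+1))" by simp
  then have sle: "8 * s \<le> n * n" using s8 by linarith
  have nn: "n * n < 2^(2*L+2)"
  proof -
    have "n * n < (2*2^L) * (2*2^L)" using mult_strict_mono[OF L6(4) L6(4)] by simp
    also have "\<dots> = 2^(2*L+2)" by (simp add: power_add power_mult_distrib flip: power_mult power2_eq_square)
    finally show ?thesis .
  qed
  define M where "M = 2*L+2"
  have n8: "64 * n \<le> n * n" using mult_le_mono1[OF n, of n] by simp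
  have ns: "n + s \<le> 2^M" using nn sle n8 unfolding M_def by linarith
  have s1: "s + 1 \<le> 2^M" using nn sle unfolding M_def by linarith
  have "(s+1) * (n+s)^s * (n+s)^s * (n+s)^n \<le> 2^M * (2^M)^s * (2^M)^s * (2^M)^n"
    by (intro mult_mono power_mono s1 ns) simp_all
  also have "\<dots> = 2^(M * (1 + s + s + n))" by (simp add: power_add power_mult algebra_simps)
  also have "\<dots> \<le> 2^(n*n - n)"
  proof (rule power_increasing)
    have a: "8 * ((L+1) * s) \<le> n*n" using s8 by (simp add: algebra_simps)
    have b: "8 * ((L+1) * n) \<le> n*n" using L6(3) by (metis mult.assoc mult_le_mono1)
    have c: "10 * n \<le> 2 * (n*n)" using n by (simp add: mult_le_mono)
    have e: "M * (1 + s + s + n) = 2*(L+1) + 4*((L+1)*s) + 2*((L+1)*n)" unfolding M_def by (simp add: algebra_simps)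
    show "M * (1 + s + s + n) \<le> n*n - n" unfolding e using a b c L6(3) by linarith
  qed simp
  finally show ?thesis .
qed

lemma ratio_arith:
  assumes n: "n \<ge> 64" and L: "L = floor_log n" and s: "s = n * n div (8 * (L + 1))"
  shows "(n div L + 1) * 2^L + n * (n div L + 1) \<le> 48 * (s + 1)"
proof -
  have L6: "L \<ge> 6" "2^L \<le> n" "8*(L+1) \<le> n" using logfacts[OF n] L by auto
  define q where "q = n div L"
  have q1: "q * L \<le> n" unfolding q_def by (rule div_times_less_eq_dividend)
  have q2: "q \<le> n" unfolding q_def by simp
  have t1: "(L+1) * (q+1) \<le> 3 * n" using q1 q2 L6(3) by (simp add: algebra_simps)
  have "(q + 1) * 2^L \<le> (q+1) * n" using L6(2) by (rule mult_le_mono2)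
  then have T: "(q + 1) * 2^L + n * (q + 1) \<le> 2 * n * (q+1)" by (simp add: algebra_simps)
  have ns: "n * n < (s+1) * (8*(L+1))" unfolding s using dividend_less_div_times[of "8*(L+1)" "n*n"] by simp
  have "8 * (L+1) * (2 * n * (q+1)) = 16 * n * ((L+1)*(q+1))" by (simp add: algebra_simps)
  also have "\<dots> \<le> 16 * n * (3*n)" using t1 by (rule mult_le_mono2)
  also have "\<dots> = 48 * (n * n)" by simp
  also have "\<dots> < 48 * ((s+1) * (8*(L+1)))" using ns by simp
  finally have "(8*(L+1)) * (2 * n * (q+1)) < (8*(L+1)) * (48 * (s+1))" by (simp add: algebra_simps)
  then have "2 * n * (q+1) < 48 * (s+1)" by simp
  then show ?thesis using T unfolding q_def by linarith
qed




lemma good_ratio: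
  assumes n: "n \<ge> 64" and L: "L = floor_log n" and s: "s = n * n div (8 * (L + 1))"
    and ne: "\<forall>i<n. {j. j<n \<and> (i,j)\<in>A} \<noteq> {}"
    and nc: "\<not> (\<exists>D. computes n D A \<and> ngates D \<le> s)"
  shows "ratio_bounded 48 n A"
proof -
  have L1: "L \<ge> 1" using logfacts(1)[OF n] L by simp
  obtain C where C: "computes n C A" "cancellation_free n C"
      "ngates C \<le> (n div L + 1) * 2^L + n * (n div L + 1)"
    using upper[OF L1 ne] by blast
  have Cb: "ngates C \<le> 48 * (s+1)" using C(3) ratio_arith[OF n L s] by linarith
  have "real (ngates C) \<le> 48 * real (ngates D)" if "computes n D A" for D
  proof -
    have "s + 1 \<le> ngates D" using nc that by fastforce
    then have "48 * (s + 1) \<le> 48 * ngates D" by simp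
    then have "ngates C \<le> 48 * ngates D" using le_trans[OF Cb] by blast
    then have "real (ngates C) \<le> real (48 * ngates D)" by (simp only: of_nat_le_iff)
    then show ?thesis by simp
  qed
  then show ?thesis unfolding ratio_bounded_def using C(1,2) by blast
qed

lemma lower_bound:
  assumes n: "n \<ge> 64"
  shows "1 - (real n + 1) / 2^n \<le> real (card {A \<in> Pow ({..<n} \<times> {..<n}). ratio_bounded 48 n A}) / 2 ^ (n * n)"
proof -
  define L where "L = floor_log n"
  define s where "s = n * n div (8 * (L + 1))"
  define P where "P = Pow ({..<n} \<times> {..<(n::nat)})"
  define Gd where "Gd = {A \<in> P. ratio_bounded 48 n A}"
  define Z where "Z = {A \<in> P. \<exists>i<n. {j. j<n \<and> (i,j)\<in>A} = {}}"
  define Ch where "Ch = {A \<in> P. \<exists>D. computes n D A \<and> ngates D \<le> s}"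
  have sub: "P \<subseteq> Gd \<union> Z \<union> Ch"
  proof
    fix A assume A: "A \<in> P"
    show "A \<in> Gd \<union> Z \<union> Ch"
    proof (cases "A \<in> Z \<union> Ch")
      case True then show ?thesis by blast
    next
      case False
      then have ne: "\<forall>i<n. {j. j<n \<and> (i,j)\<in>A} \<noteq> {}" and nc: "\<not> (\<exists>D. computes n D A \<and> ngates D \<le> s)"
        using A unfolding Z_def Ch_def by blast+
      have "ratio_bounded 48 n A" by (rule good_ratio[OF n L_def s_def ne nc])
      then show ?thesis using A unfolding Gd_def by blast
    qed
  qed
  have fP: "finite P" unfolding P_def by simp
  have cP: "card P = 2^(n*n)" unfolding P_def by (simp add: card_Pow card_cartesian_product)
  have "card P \<le> card (Gd \<union> Z \<union> Ch)" by (rule card_mono[OF _ sub]) (use fP in \<open>auto simp: Gd_def Z_def Ch_def\<close>)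
  also have "\<dots> \<le> card Gd + card Z + card Ch" by (meson card_Un_le le_trans add_le_mono1)
  finally have c1: "2^(n*n) \<le> card Gd + card Z + card Ch" using cP by simp
  have cZ: "card Z \<le> n * 2^(n*n - n)" unfolding Z_def P_def by (rule zero_count)
  have cC: "card Ch \<le> 2^(n*n - n)" unfolding Ch_def P_def
    using cheap_count[of n s] count_arith[OF n L_def s_def] by linarith
  have r1: "(2::real)^(n*n) \<le> real (card Gd) + (real n + 1) * 2^(n*n - n)"
  proof -
    have "2^(n*n) \<le> card Gd + (n + 1) * 2^(n*n - n)" using c1 cZ cC by (simp add: algebra_simps)
    then have "real (2^(n*n)) \<le> real (card Gd + (n + 1) * 2^(n*n - n))" by (simp only: of_nat_le_iff)
    then show ?thesis by (simp add: algebra_simps)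
  qed
  have pw: "(2::real)^(n*n) = 2^(n*n - n) * 2^n"
  proof -
    have "n \<le> n * n" using n by simp
    then have "n*n = (n*n - n) + n" by simp
    then show ?thesis by (metis power_add)
  qed
  have pos: "(0::real) < 2^(n*n)" by simp
  have "1 - (real n + 1) / 2^n = (2^(n*n) - (real n + 1) * 2^(n*n - n)) / 2^(n*n)"
    using pw by (simp add: field_simps)
  also have "\<dots> \<le> real (card Gd) / 2^(n*n)"
    by (rule divide_right_mono) (use r1 in simp_all)
  finally show ?thesis unfolding Gd_def P_def .
qed

lemma upper_one:
  "real (card {A \<in> Pow ({..<n} \<times> {..<n}). ratio_bounded c n A}) / 2 ^ (n * n) \<le> 1"
proof -
  have "card {A \<in> Pow ({..<n} \<times> {..<(n::nat)}). ratio_bounded c n A} \<le> card (Pow ({..<n} \<times> {..<n}))"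
    by (rule card_mono) auto
  also have "\<dots> = 2^(n*n)" by (simp add: card_Pow card_cartesian_product)
  finally have "real (card {A \<in> Pow ({..<n} \<times> {..<(n::nat)}). ratio_bounded c n A}) \<le> 2^(n*n)"
    by (metis of_nat_le_iff of_nat_numeral of_nat_power)
  then show ?thesis by simp
qed

theorem theorem3:
  shows "\<exists>c::real. (\<lambda>n. real (card {A \<in> Pow ({..<n} \<times> {..<n}). ratio_bounded c n A})
                          / 2 ^ (n * n)) \<longlonglongrightarrow> 1"
proof (intro exI[of _ 48])
  have l1: "(\<lambda>n. real n / 2^n) \<longlonglongrightarrow> 0" using lim_n_over_pown[of "2::real"] by simp
  have l2: "(\<lambda>n. 1 / (2::real)^n) \<longlonglongrightarrow> 0" by (rule LIMSEQ_divide_realpow_zero) simp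
  have "(\<lambda>n. real n / 2^n + 1 / (2::real)^n) \<longlonglongrightarrow> 0 + 0" by (rule tendsto_add[OF l1 l2])
  then have "(\<lambda>n. (real n + 1) / (2::real)^n) \<longlonglongrightarrow> 0" by (simp add: add_divide_distrib)
  then have low: "(\<lambda>n. 1 - (real n + 1) / (2::real)^n) \<longlonglongrightarrow> 1 - 0" by (intro tendsto_diff) simp_all
  show "(\<lambda>n. real (card {A \<in> Pow ({..<n} \<times> {..<n}). ratio_bounded 48 n A}) / 2 ^ (n * n)) \<longlonglongrightarrow> 1"
  proof (rule tendsto_sandwich[OF _ _ _ tendsto_const])
    show "\<forall>\<^sub>F n in sequentially. 1 - (real n + 1) / 2^n \<le>
        real (card {A \<in> Pow ({..<n} \<times> {..<n}). ratio_bounded 48 n A}) / 2 ^ (n * n)"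
      unfolding eventually_sequentially using lower_bound by blast
    show "\<forall>\<^sub>F n in sequentially.
        real (card {A \<in> Pow ({..<n} \<times> {..<n}). ratio_bounded 48 n A}) / 2 ^ (n * n) \<le> 1"
      using upper_one by simp
    show "(\<lambda>n. 1 - (real n + 1) / (2::real)^n) \<longlonglongrightarrow> 1" using low by simp
  qed
qed


end
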